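(* Let $K_1,\ldots,K_d\subset\mathbb C$ be compact sets and $f:K_1\times\cdots\times K_d\to\mathbb C$. The following are equivalent: (a) $f\in A_D(K_1\times\cdots\times K_d)$; (b) $f$ is continuous on $K_1\times\cdots\times K_d$, and for each $i_0\in\{1,\ldots,d\}$ and each choice of points $w_i\in K_i$ for $i\neq i_0$ (points of the boundary $\partial K_i$ allowed), the function $z\mapsto f(z_1(z),\ldots,z_d(z))$, where $z_{i_0}(z)=z$ and $z_i(z)=w_i$ for $i\ne i_0$, is holomorphic on the interior $K_{i_0}^\circ$.
   Context: For a compact set $K\subset\mathbb C^d$, $A_D(K)$ is the set of continuous functions $f:K\to\mathbb C$ such that for every open disc $D\subset\mathbb C$ and every injective holomorphic mapping $\phi:D\to\mathbb C^d$ with $\phi(D)\subset K$ (holomorphic meaning each coordinate is holomorphic), the composition $f\circ\phi:D\to\mathbb C$ is holomorphic. *)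

theory Defs
  imports "HOL-Complex_Analysis.Complex_Analysis"
begin

text \<open>Points of C^d are vectors \<open>complex ^ 'n\<close> with d = CARD('n).\<close>

definition prod_set :: "('n::finite \<Rightarrow> complex set) \<Rightarrow> (complex ^ 'n) set" where
  "prod_set K = {z. \<forall>i. z $ i \<in> K i}"

definition A_D :: "(complex ^ 'n::finite) set \<Rightarrow> (complex ^ 'n \<Rightarrow> complex) \<Rightarrow> bool" where
  "A_D K f \<longleftrightarrow> continuous_on K f \<and>
     (\<forall>c r (\<phi> :: complex \<Rightarrow> complex ^ 'n).
        r > 0 \<and> inj_on \<phi> (ball c r) \<and> (\<forall>i. (\<lambda>z. \<phi> z $ i) holomorphic_on ball c r)
        \<and> \<phi> ` ball c r \<subseteq> K
        \<longrightarrow> (f \<circ> \<phi>) holomorphic_on ball c r)"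

end

theory Submission
  imports Defs
begin

definition upd :: "complex^'n::finite \<Rightarrow> 'n \<Rightarrow> complex \<Rightarrow> complex^'n" where
  "upd z k \<zeta> = (\<chi> i. if i = k then \<zeta> else z$i)"

definition pd :: "(complex^'n::finite \<Rightarrow> complex) \<Rightarrow> 'n \<Rightarrow> complex^'n \<Rightarrow> complex" where
  "pd f k z = deriv (\<lambda>\<zeta>. f (upd z k \<zeta>)) (z$k)"

lemma upd_nth[simp]: "upd z k \<zeta> $ i = (if i = k then \<zeta> else z$i)"
  by (simp add: upd_def)

lemma upd_upd[simp]: "upd (upd z k a) k b = upd z k b"
  by (simp add: vec_eq_iff)

lemma upd_same[simp]: "upd z k (z$k) = z"
  by (simp add: vec_eq_iff)

lemma norm_cart_le_sum: "norm (x::complex^'n::finite) \<le> (\<Sum>i\<in>UNIV. norm (x$i))"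
  by (simp add: norm_vec_def L2_set_le_sum)

lemma upd_in: "z \<in> prod_set K \<Longrightarrow> \<zeta> \<in> K k \<Longrightarrow> upd z k \<zeta> \<in> prod_set K"
  by (simp add: prod_set_def)

lemma dist_upd: "dist (upd z k \<zeta>) (upd w k \<zeta>) \<le> dist z w"
  unfolding dist_norm by (rule norm_le_componentwise_cart) auto

lemma compact_prod_set:
  assumes "\<And>i. compact (K i)" shows "compact (prod_set K)"
proof -
  have eq: "prod_set K = (\<Inter>i. (\<lambda>z. z$i) -` K i)"
    by (auto simp: prod_set_def)
  have "closed (prod_set K)"
    unfolding eq
    by (intro closed_INT ballI continuous_closed_vimage compact_imp_closed assms) 
       (simp add: bounded_linear_vec_nth linear_continuous_at)
  moreover
  have "\<forall>i. \<exists>B. \<forall>x\<in>K i. norm x \<le> B"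
    using assms compact_imp_bounded bounded_iff by metis
  then obtain B where B: "\<And>i x. x \<in> K i \<Longrightarrow> norm x \<le> B i" by metis
  have "bounded (prod_set K)"
    unfolding bounded_iff
  proof (intro exI ballI)
    fix z assume "z \<in> prod_set K"
    then have "\<And>i. norm (z$i) \<le> B i" by (auto simp: prod_set_def B)
    then show "norm z \<le> (\<Sum>i\<in>UNIV. B i)"
      using norm_cart_le_sum[of z] sum_mono[of UNIV "\<lambda>i. norm (z$i)" B] by force
  qed
  ultimately show ?thesis by (simp add: compact_eq_bounded_closed)
qed

lemma pd_cont:
  fixes K :: "'n::finite \<Rightarrow> complex set" and f :: "complex ^ 'n \<Rightarrow> complex"
  assumes cont: "continuous_on (prod_set K) f" and comp: "compact (prod_set K)"
    and hol: "\<And>k z. z \<in> prod_set K \<Longrightarrow> (\<lambda>\<zeta>. f (upd z k \<zeta>)) holomorphic_on interior (K k)"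
    and z0: "z0 \<in> prod_set K" "z0$k \<in> interior (K k)" and e: "e > 0"
  shows "\<exists>d>0. \<forall>z\<in>prod_set K. dist z z0 < d \<longrightarrow> norm (pd f k z - pd f k z0) < e"
proof -
  obtain R where R: "R > 0" "ball (z0$k) R \<subseteq> interior (K k)"
    using z0(2) open_contains_ball open_interior by blast
  define r where "r = R/2"
  have r: "r > 0" using R by (simp add: r_def)
  have uc: "uniformly_continuous_on (prod_set K) f"
    using compact_uniformly_continuous cont comp by blast
  obtain \<eta> where \<eta>: "\<eta> > 0" "\<And>x y. x \<in> prod_set K \<Longrightarrow> y \<in> prod_set K \<Longrightarrow> dist y x < \<eta> \<Longrightarrow> dist (f y) (f x) < e*r/3"
    using uc[unfolded uniformly_continuous_on_def, rule_format, of "e*r/3"] e r by auto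
  define g0 where "g0 = (\<lambda>\<zeta>. f (upd z0 k \<zeta>))"
  have hg0: "g0 holomorphic_on interior (K k)" using hol z0 by (simp add: g0_def)
  have "deriv g0 holomorphic_on interior (K k)"
    using hg0 holomorphic_deriv open_interior by blast
  then have "continuous (at (z0$k)) (deriv g0)"
    using z0(2) holomorphic_on_imp_continuous_on continuous_on_eq_continuous_at open_interior by blast
  then obtain \<delta>2 where \<delta>2: "\<delta>2 > 0" "\<And>y. dist y (z0$k) < \<delta>2 \<Longrightarrow> dist (deriv g0 y) (deriv g0 (z0$k)) < e/3"
    using e unfolding continuous_at_eps_delta by (metis divide_pos_pos zero_less_numeral)
  have pd0: "pd f k z0 = deriv g0 (z0$k)" by (simp add: pd_def g0_def)
  show ?thesis
  proof (intro exI[of _ "min r (min \<eta> \<delta>2)"] conjI ballI impI)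
    show "min r (min \<eta> \<delta>2) > 0" using r \<eta> \<delta>2 by simp
    fix z assume zP: "z \<in> prod_set K" and dz: "dist z z0 < min r (min \<eta> \<delta>2)"
    have zk: "dist (z$k) (z0$k) < min r (min \<eta> \<delta>2)"
      using dz dist_vec_nth_le le_less_trans by blast
    define g where "g = (\<lambda>\<zeta>. f (upd z k \<zeta>))"
    have hg: "g holomorphic_on interior (K k)" using hol zP by (simp add: g_def)
    define D where "D = (\<lambda>\<zeta>. g \<zeta> - g0 \<zeta>)"
    have sub: "cball (z$k) r \<subseteq> interior (K k)"
    proof
      fix x assume "x \<in> cball (z$k) r"
      then have "dist (z0$k) x < R" using zk dist_triangle[of "z0$k" x "z$k"]
        by (simp add: r_def dist_commute)
      then show "x \<in> interior (K k)" using R by auto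
    qed
    have hD: "D holomorphic_on interior (K k)" unfolding D_def using hg hg0 by (intro holomorphic_intros)
    have "norm ((deriv ^^ 1) D (z$k)) \<le> fact 1 * (e*r/3) / r^1"
    proof (rule Cauchy_inequality)
      show "D holomorphic_on ball (z$k) r" using hD sub ball_subset_cball holomorphic_on_subset by blast
      show "continuous_on (cball (z$k) r) D"
        using hD sub holomorphic_on_imp_continuous_on continuous_on_subset by blast
      show "0 < r" by fact
      fix x assume "norm (z$k - x) = r"
      then have "x \<in> cball (z$k) r" by (simp add: dist_norm)
      then have xK: "x \<in> K k" using sub interior_subset by blast
      have "dist (upd z k x) (upd z0 k x) < \<eta>"
        using dist_upd[of z k x z0] dz by linarith
      then have "dist (f (upd z k x)) (f (upd z0 k x)) < e*r/3"
        using \<eta>(2)[of "upd z0 k x" "upd z k x"] upd_in[OF zP xK] upd_in[OF z0(1) xK] by simp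
      then show "norm (D x) \<le> e*r/3" by (simp add: D_def g_def g0_def dist_norm)
    qed
    then have nD: "norm (deriv D (z$k)) \<le> e/3" using r by simp
    have zkint: "z$k \<in> interior (K k)" using sub r by auto
    have "deriv D (z$k) = deriv g (z$k) - deriv g0 (z$k)"
      unfolding D_def
      by (rule deriv_diff; meson holomorphic_on_imp_differentiable_at hg hg0 open_interior zkint)
    moreover have "pd f k z = deriv g (z$k)" by (simp add: pd_def g_def)
    moreover have "norm (deriv g0 (z$k) - deriv g0 (z0$k)) < e/3"
      using \<delta>2(2)[of "z$k"] zk by (simp add: dist_norm)
    ultimately have "norm (pd f k z - pd f k z0) \<le> norm (deriv D (z$k)) + norm (deriv g0 (z$k) - deriv g0 (z0$k))"
      using pd0 norm_triangle_ineq[of "deriv D (z$k)" "deriv g0 (z$k) - deriv g0 (z0$k)"] by simp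
    then show "norm (pd f k z - pd f k z0) < e"
      using nD \<open>norm (deriv g0 (z$k) - deriv g0 (z0$k)) < e/3\<close> e by linarith
  qed
qed

lemma step_lemma:
  fixes K :: "'n::finite \<Rightarrow> complex set" and f :: "complex ^ 'n \<Rightarrow> complex"
    and \<phi> :: "complex \<Rightarrow> complex^'n"
  assumes cont: "continuous_on (prod_set K) f" and comp: "compact (prod_set K)"
    and hol: "\<And>k z. z \<in> prod_set K \<Longrightarrow> (\<lambda>\<zeta>. f (upd z k \<zeta>)) holomorphic_on interior (K k)"
    and hphi: "\<And>i. (\<lambda>t. \<phi> t $ i) holomorphic_on ball c r" and img: "\<phi> ` ball c r \<subseteq> prod_set K"
    and t0: "t0 \<in> ball c r" and kS: "k \<notin> S"
  shows "((\<lambda>t. (f (\<chi> i. if i \<in> insert k S then \<phi> t $ i else \<phi> t0 $ i)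
               - f (\<chi> i. if i \<in> S then \<phi> t $ i else \<phi> t0 $ i))/(t - t0))
          \<longlongrightarrow> deriv (\<lambda>t. \<phi> t $ k) t0 * pd f k (\<phi> t0)) (at t0)"
proof -
  define B where "B = ball c r"
  define z0 where "z0 = \<phi> t0"
  define q where "q = (\<lambda>t. (\<chi> i. if i \<in> S then \<phi> t $ i else z0 $ i))"
  define c0 where "c0 = pd f k z0"
  define d0 where "d0 = deriv (\<lambda>t. \<phi> t $ k) t0"
  have z0P: "z0 \<in> prod_set K" using img t0 by (auto simp: z0_def)
  have phiP: "\<And>t. t \<in> B \<Longrightarrow> \<phi> t \<in> prod_set K" using img by (auto simp: B_def)
  have qP: "\<And>t. t \<in> B \<Longrightarrow> q t \<in> prod_set K"
    using phiP z0P by (auto simp: prod_set_def q_def)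
  have qk: "\<And>t. q t $ k = z0 $ k" using kS by (simp add: q_def)
  have e1: "\<And>t. (\<chi> i. if i \<in> insert k S then \<phi> t $ i else \<phi> t0 $ i) = upd (q t) k (\<phi> t $ k)"
    by (auto simp: vec_eq_iff q_def z0_def)
  have e2: "\<And>t. (\<chi> i. if i \<in> S then \<phi> t $ i else \<phi> t0 $ i) = upd (q t) k (z0 $ k)"
    using kS by (auto simp: vec_eq_iff q_def z0_def)
  define Q where "Q = (\<lambda>t. (\<phi> t $ k - z0 $ k) / (t - t0))"
  define E where "E = (\<lambda>t. (f (upd (q t) k (\<phi> t $ k)) - f (upd (q t) k (z0 $ k)))/(t - t0) - Q t * c0)"
  have dphi: "((\<lambda>t. \<phi> t $ k) has_field_derivative d0) (at t0)"
    unfolding d0_def using holomorphic_derivI[OF hphi open_ball t0] .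
  then have Qlim: "(Q \<longlongrightarrow> d0) (at t0)"
    unfolding Q_def z0_def has_field_derivative_iff by simp
  have evB: "eventually (\<lambda>t. t \<in> B) (at t0)"
    using t0 unfolding B_def by (intro eventually_at_in_open') auto
  have Elim: "(E \<longlongrightarrow> 0) (at t0)"
  proof (cases "(\<lambda>t. \<phi> t $ k) constant_on B")
    case True
    then obtain a where a: "\<And>t. t \<in> B \<Longrightarrow> \<phi> t $ k = a" by (auto simp: constant_on_def)
    have "eventually (\<lambda>t. 0 = E t) (at t0)"
      using evB
    proof eventually_elim
      case (elim t)
      then have "\<phi> t $ k = z0 $ k" using a t0 by (simp add: z0_def B_def)
      then show ?case by (simp add: E_def Q_def)
    qed
    then show ?thesis by (rule Lim_transform_eventually[OF tendsto_const])
  next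
    case False
    have "open ((\<lambda>t. \<phi> t $ k) ` B)"
      using open_mapping_thm[OF hphi[of k] open_ball connected_ball open_ball order_refl] False
      by (simp add: B_def)
    moreover have "(\<lambda>t. \<phi> t $ k) ` B \<subseteq> K k" using phiP by (auto simp: prod_set_def)
    ultimately have imgint: "(\<lambda>t. \<phi> t $ k) ` B \<subseteq> interior (K k)"
      by (simp add: interior_maximal)
    have z0k: "z0 $ k \<in> interior (K k)" using imgint t0 by (auto simp: z0_def B_def)
    obtain \<rho> where \<rho>: "\<rho> > 0" "ball (z0$k) \<rho> \<subseteq> interior (K k)"
      using z0k open_contains_ball open_interior by blast
    define M where "M = norm d0 + 1"
    have M: "M > 0" unfolding M_def using norm_ge_zero[of d0] by linarith
    have evQ: "eventually (\<lambda>t. norm (Q t) < M) (at t0)"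
    proof -
      have "eventually (\<lambda>t. dist (Q t) d0 < 1) (at t0)"
        using Qlim[unfolded tendsto_iff, rule_format, of 1] by simp
      then show ?thesis
      proof eventually_elim
        case (elim t)
        then show ?case using norm_triangle_ineq2[of "Q t" d0] by (simp add: M_def dist_norm)
      qed
    qed
    define s where "s = (\<lambda>t. \<Sum>i\<in>UNIV. norm (\<phi> t $ i - z0 $ i))"
    have slim: "(s \<longlongrightarrow> 0) (at t0)"
    proof -
      have ci: "((\<lambda>t. \<phi> t $ i) \<longlongrightarrow> z0 $ i) (at t0)" for i
      proof -
        have "continuous_on B (\<lambda>t. \<phi> t $ i)"
          using hphi holomorphic_on_imp_continuous_on by (simp add: B_def)
        then have "isCont (\<lambda>t. \<phi> t $ i) t0"
          using t0 continuous_on_eq_continuous_at[OF open_ball, of c r] unfolding B_def by blast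
        then show ?thesis by (simp add: isCont_def z0_def)
      qed
      have "(s \<longlongrightarrow> (\<Sum>i\<in>UNIV. norm (z0 $ i - z0 $ i))) (at t0)"
        unfolding s_def by (rule tendsto_sum, rule tendsto_norm, rule tendsto_diff, rule ci, rule tendsto_const)
      then show ?thesis by simp
    qed
    show ?thesis
    proof (rule tendstoI)
      fix \<epsilon> :: real assume \<epsilon>: "\<epsilon> > 0"
      define \<epsilon>1 where "\<epsilon>1 = \<epsilon> / (2*M)"
      have \<epsilon>1: "\<epsilon>1 > 0" using \<epsilon> M by (simp add: \<epsilon>1_def)
      obtain \<delta> where \<delta>: "\<delta> > 0" "\<And>z. z \<in> prod_set K \<Longrightarrow> dist z z0 < \<delta> \<Longrightarrow> norm (pd f k z - c0) < \<epsilon>1"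
        using pd_cont[OF cont comp hol z0P z0k \<epsilon>1] unfolding c0_def by blast
      have evs: "eventually (\<lambda>t. s t < min \<delta> \<rho>) (at t0)"
      proof -
        have "eventually (\<lambda>t. dist (s t) 0 < min \<delta> \<rho>) (at t0)"
          using slim[unfolded tendsto_iff, rule_format, of "min \<delta> \<rho>"] \<delta> \<rho> by simp
        then show ?thesis by (rule eventually_mono) (simp add: dist_norm, linarith)
      qed
      have evne: "eventually (\<lambda>t. t \<noteq> t0) (at t0)" by (simp add: eventually_at_filter)
      show "eventually (\<lambda>t. dist (E t) 0 < \<epsilon>) (at t0)"
        using evB evQ evs evne
      proof eventually_elim
        case (elim t)
        define a where "a = z0 $ k"
        define b where "b = \<phi> t $ k"
        have sab: "norm (b - a) \<le> s t"
          unfolding s_def a_def b_def by (rule member_le_sum) auto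
        have aball: "a \<in> ball a (min \<delta> \<rho>)" using \<delta> \<rho> by simp
        have bball: "b \<in> ball a (min \<delta> \<rho>)" using sab elim by (simp add: dist_norm norm_minus_commute)
        have seg: "closed_segment a b \<subseteq> ball a (min \<delta> \<rho>)"
          using closed_segment_subset[OF aball bball] by simp
        have segint: "closed_segment a b \<subseteq> interior (K k)"
        proof -
          have "ball a (min \<delta> \<rho>) \<subseteq> ball a \<rho>" by (rule subset_ball) simp
          then show ?thesis using seg \<rho> by (simp add: a_def)
        qed
        define g where "g = (\<lambda>\<xi>. f (upd (q t) k \<xi>))"
        have hg: "g holomorphic_on interior (K k)" using hol qP elim by (simp add: g_def)
        have bnd: "norm ((g b - b * c0) - (g a - a * c0)) \<le> \<epsilon>1 * norm (b - a)"
        proof (rule field_differentiable_bound[where f' = "\<lambda>\<zeta>. deriv g \<zeta> - c0"])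
          show "convex (closed_segment a b)" by simp
          show "a \<in> closed_segment a b" "b \<in> closed_segment a b" by auto
          fix \<zeta> assume \<zeta>: "\<zeta> \<in> closed_segment a b"
          have \<zeta>int: "\<zeta> \<in> interior (K k)" using \<zeta> segint by blast
          show "((\<lambda>\<xi>. g \<xi> - \<xi> * c0) has_field_derivative deriv g \<zeta> - c0) (at \<zeta> within closed_segment a b)"
            using holomorphic_derivI[OF hg open_interior \<zeta>int]
            by (auto intro!: derivative_eq_intros)
          have "dist \<zeta> a \<le> dist a b" using dist_in_closed_segment[OF \<zeta>] by simp
          then have \<zeta>a: "norm (\<zeta> - a) \<le> norm (b - a)" by (simp add: dist_norm norm_minus_commute)
          have "norm (upd (q t) k \<zeta> - z0) \<le> (\<Sum>i\<in>UNIV. norm ((upd (q t) k \<zeta> - z0) $ i))"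
            by (rule norm_cart_le_sum)
          also have "\<dots> \<le> s t"
            unfolding s_def
          proof (rule sum_mono)
            fix i
            show "norm ((upd (q t) k \<zeta> - z0) $ i) \<le> norm (\<phi> t $ i - z0 $ i)"
              using \<zeta>a by (auto simp: q_def a_def b_def)
          qed
          finally have "dist (upd (q t) k \<zeta>) z0 < \<delta>" using elim by (simp add: dist_norm)
          moreover have "upd (q t) k \<zeta> \<in> prod_set K"
            using upd_in[OF qP[OF elim(1)]] \<zeta>int interior_subset by blast
          ultimately have "norm (pd f k (upd (q t) k \<zeta>) - c0) < \<epsilon>1" using \<delta> by blast
          moreover have "pd f k (upd (q t) k \<zeta>) = deriv g \<zeta>" by (simp add: pd_def g_def)
          ultimately show "norm (deriv g \<zeta> - c0) \<le> \<epsilon>1" by simp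
        qed
        have Et: "E t = ((g b - b * c0) - (g a - a * c0)) / (t - t0)"
        proof -
          have "E t = (g b - g a) / (t - t0) - ((b - a) / (t - t0)) * c0"
            by (simp add: E_def Q_def g_def a_def b_def)
          also have "\<dots> = ((g b - g a) - (b - a) * c0) / (t - t0)"
            by (simp add: diff_divide_distrib[symmetric] times_divide_eq_left)
          also have "(g b - g a) - (b - a) * c0 = (g b - b * c0) - (g a - a * c0)"
            by (simp add: algebra_simps)
          finally show ?thesis .
        qed
        have "norm (E t) \<le> \<epsilon>1 * norm (b - a) / norm (t - t0)"
          unfolding Et norm_divide using bnd by (simp add: divide_right_mono)
        also have "\<dots> = \<epsilon>1 * norm (Q t)" by (simp add: Q_def a_def b_def norm_divide)
        also have "\<dots> \<le> \<epsilon>1 * M" using elim \<epsilon>1 by (simp add: less_imp_le)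
        also have "\<dots> < \<epsilon>" using \<epsilon> M by (simp add: \<epsilon>1_def)
        finally show ?case by simp
      qed
    qed
  qed
  have "((\<lambda>t. E t + Q t * c0) \<longlongrightarrow> 0 + d0 * c0) (at t0)"
    by (intro tendsto_intros Elim Qlim)
  moreover have "\<And>t. E t + Q t * c0 = (f (upd (q t) k (\<phi> t $ k)) - f (upd (q t) k (z0 $ k)))/(t - t0)"
    by (simp add: E_def)
  ultimately show ?thesis unfolding e1 e2 by (simp add: d0_def c0_def z0_def)
qed

theorem mainTheorem9:
  fixes K :: "'n::finite \<Rightarrow> complex set" and f :: "complex ^ 'n \<Rightarrow> complex"
  assumes "\<And>i. compact (K i)"
  shows "A_D (prod_set K) f \<longleftrightarrow>
    (continuous_on (prod_set K) f \<and>
     (\<forall>i0 (w :: complex ^ 'n). (\<forall>i. i \<noteq> i0 \<longrightarrow> w $ i \<in> K i) \<longrightarrow>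
        (\<lambda>z. f (\<chi> i. if i = i0 then z else w $ i)) holomorphic_on interior (K i0)))"
proof
  assume A: "A_D (prod_set K) f"
  show "continuous_on (prod_set K) f \<and>
     (\<forall>i0 (w :: complex ^ 'n). (\<forall>i. i \<noteq> i0 \<longrightarrow> w $ i \<in> K i) \<longrightarrow>
        (\<lambda>z. f (\<chi> i. if i = i0 then z else w $ i)) holomorphic_on interior (K i0))"
  proof (intro conjI allI impI)
    show "continuous_on (prod_set K) f" using A by (simp add: A_D_def)
    fix i0 and w :: "complex^'n" assume w: "\<forall>i. i \<noteq> i0 \<longrightarrow> w $ i \<in> K i"
    define \<phi> where "\<phi> = (\<lambda>z. (\<chi> i. if i = i0 then z else w $ i) :: complex^'n)"
    have "(f \<circ> \<phi>) holomorphic_on interior (K i0)"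
      unfolding holomorphic_on_open[OF open_interior]
    proof
      fix x assume x: "x \<in> interior (K i0)"
      obtain e where e: "e > 0" "ball x e \<subseteq> interior (K i0)"
        using x open_contains_ball open_interior by blast
      have "inj_on \<phi> (ball x e)"
      proof (rule inj_onI)
        fix a b assume "\<phi> a = \<phi> b"
        then have "\<phi> a $ i0 = \<phi> b $ i0" by simp
        then show "a = b" by (simp add: \<phi>_def)
      qed
      moreover have "(\<lambda>z. \<phi> z $ i) holomorphic_on ball x e" for i
        by (cases "i = i0") (simp_all add: \<phi>_def holomorphic_on_const holomorphic_on_ident)
      moreover have "\<phi> ` ball x e \<subseteq> prod_set K"
        using e w interior_subset by (fastforce simp: \<phi>_def prod_set_def)
      ultimately have "(f \<circ> \<phi>) holomorphic_on ball x e"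
        using A e unfolding A_D_def by blast
      then have "(f \<circ> \<phi>) field_differentiable (at x)"
        using holomorphic_on_imp_differentiable_at e by (meson centre_in_ball open_ball)
      then show "\<exists>f'. ((f \<circ> \<phi>) has_field_derivative f') (at x)"
        by (simp add: field_differentiable_def)
    qed
    then show "(\<lambda>z. f (\<chi> i. if i = i0 then z else w $ i)) holomorphic_on interior (K i0)"
      by (simp add: \<phi>_def o_def)
  qed
next
  assume B: "continuous_on (prod_set K) f \<and>
     (\<forall>i0 (w :: complex ^ 'n). (\<forall>i. i \<noteq> i0 \<longrightarrow> w $ i \<in> K i) \<longrightarrow>
        (\<lambda>z. f (\<chi> i. if i = i0 then z else w $ i)) holomorphic_on interior (K i0))"
  have cont: "continuous_on (prod_set K) f" using B by blast
  have hol: "\<And>k z. z \<in> prod_set K \<Longrightarrow> (\<lambda>\<zeta>. f (upd z k \<zeta>)) holomorphic_on interior (K k)"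
  proof -
    fix k and z :: "complex^'n" assume "z \<in> prod_set K"
    then have "\<forall>i. i \<noteq> k \<longrightarrow> z $ i \<in> K i" by (simp add: prod_set_def)
    then show "(\<lambda>\<zeta>. f (upd z k \<zeta>)) holomorphic_on interior (K k)"
      using B unfolding upd_def by blast
  qed
  have comp: "compact (prod_set K)" using compact_prod_set assms by blast
  show "A_D (prod_set K) f"
    unfolding A_D_def
  proof (intro conjI allI impI cont)
    fix c r and \<phi> :: "complex \<Rightarrow> complex^'n"
    assume H: "0 < r \<and> inj_on \<phi> (ball c r) \<and> (\<forall>i. (\<lambda>z. \<phi> z $ i) holomorphic_on ball c r) \<and>
       \<phi> ` ball c r \<subseteq> prod_set K"
    then have hphi: "\<And>i. (\<lambda>z. \<phi> z $ i) holomorphic_on ball c r" and img: "\<phi> ` ball c r \<subseteq> prod_set K"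
      by auto
    show "(f \<circ> \<phi>) holomorphic_on ball c r"
      unfolding holomorphic_on_open[OF open_ball]
    proof
      fix t0 assume t0: "t0 \<in> ball c r"
      define mix where "mix S t = (\<chi> i. if i \<in> S then \<phi> t $ i else \<phi> t0 $ i)" for S t
      have lim: "((\<lambda>t. (f (mix S t) - f (\<phi> t0))/(t - t0))
                 \<longlongrightarrow> (\<Sum>k\<in>S. deriv (\<lambda>t. \<phi> t $ k) t0 * pd f k (\<phi> t0))) (at t0)" for S
      proof -
        have "finite S" by simp
        then show ?thesis
        proof (induction S rule: finite_induct)
          case empty
          have "\<And>t. mix {} t = \<phi> t0" by (simp add: mix_def vec_eq_iff)
          then show ?case by simp
        next
          case (insert k S)
          have st: "((\<lambda>t. (f (mix (insert k S) t) - f (mix S t))/(t - t0))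
              \<longlongrightarrow> deriv (\<lambda>t. \<phi> t $ k) t0 * pd f k (\<phi> t0)) (at t0)"
            unfolding mix_def by (rule step_lemma[OF cont comp hol hphi img t0 insert(2)])
          have eq: "\<And>t. (f (mix (insert k S) t) - f (\<phi> t0))/(t - t0)
                 = (f (mix (insert k S) t) - f (mix S t))/(t - t0) + (f (mix S t) - f (\<phi> t0))/(t - t0)"
            by (simp add: add_divide_distrib[symmetric])
          show ?case unfolding eq sum.insert[OF insert(1,2)]
            by (rule tendsto_add[OF st insert(3)])
        qed
      qed
      have "\<And>t. mix UNIV t = \<phi> t" by (simp add: mix_def vec_eq_iff)
      then have "((f \<circ> \<phi>) has_field_derivative (\<Sum>k\<in>UNIV. deriv (\<lambda>t. \<phi> t $ k) t0 * pd f k (\<phi> t0))) (at t0)"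
        using lim[of UNIV] unfolding has_field_derivative_iff by (simp add: o_def)
      then show "\<exists>f'. ((f \<circ> \<phi>) has_field_derivative f') (at t0)" by blast
    qed
  qed
qed

end
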